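(* Let $B$ be a board and $S$ a set of sinks such that every region of $B$ contains a sink, and let $T$ be a minimum-weight arborescence (converging to the root $r$) of the extended large tilt graph $\hat G_L(B,S)$. If $(p_1,q_1)$ and $(p_2,q_2)$ are two distinct inverse edges in $T$ whose heads $q_1$ and $q_2$ lie in the same row segment $R$, then at most one of the tails $p_1,p_2$ lies in $R$.
   Context: Pixels are unit squares indexed by $\mathbb{Z}^2$. A board $B=(V,E)$ is a finite subgraph of the square grid graph on $\mathbb{Z}^2$; regions are its connected components; its boundary consists of pixel sides not shared with a neighbouring pixel joined by an edge of $E$. $S\subseteq V$ are sinks. For a pixel $p$, its row (column) segment is the maximal set of pixels reachable from $p$ using only horizontal (vertical) edges of $E$; $p^\ell,p^r$ are the leftmost/rightmost pixels of its row segment and $p^u,p^d$ the topmost/bottommost pixels of its column segment. The full tilt graph $G_F(B)$ has vertex set $V$ and edges $(p,p^x)$ for $x\in\{\ell,r,u,d\}$, $p^x\ne p$. A corner pixel is a pixel $p$ with $p=p^x=p^y$ for some $x\in\{\ell,r\}$, $y\in\{u,d\}$. The large tilt graph $G_L(B,S)$ is the subgraph of $G_F(B)$ induced by the vertex set consisting of (i) all pixels reachable in $G_F(B)$ from corner pixels, (ii) every sink $s$ and $s^\ell,s^r,s^u,s^d$, (iii) for every reflex corner of the boundary, the endpoints of the row and column segments of the pixels incident to that corner, (iv) all pixels on the intersection of a row segment and a column segment each containing a pixel included in (i)–(iii). Extended graph: for a directed graph $G$ with sinks $S$, $\hat G$ has vertex set $V(G)\cup\{r\}$ with new root $r$ and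 edges: every edge of $G$ with weight $0$; for every edge $(p,q)$ of $G$ such that $(q,p)$ is not an edge of $G$, the inverse edge $(q,p)$ with weight $1$; and $(s,r)$ with weight $0$ for each $s\in S$. An arborescence converging to $r$ is a spanning subgraph in which every vertex other than $r$ has exactly one outgoing edge and a directed path to $r$; its weight is the sum of its edge weights. *)

theory Defs
  imports Main
begin

(* Pixels: p = (x, y); x = column index (increasing to the right),
   y = row index (increasing downwards, so "top" = smallest y).
   Pixel (x,y) occupies the unit square [x,x+1] x [y,y+1]. *)
type_synonym pixel = "int \<times> int"

definition grid_adj :: "pixel \<Rightarrow> pixel \<Rightarrow> bool" where
  "grid_adj p q \<longleftrightarrow>
     (fst p = fst q \<and> \<bar>snd p - snd q\<bar> = 1) \<or> (snd p = snd q \<and> \<bar>fst p - fst q\<bar> = 1)"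

definition board :: "pixel set \<Rightarrow> (pixel \<times> pixel) set \<Rightarrow> bool" where
  "board V E \<longleftrightarrow> finite V \<and> E \<subseteq> V \<times> V \<and> (\<forall>(p,q)\<in>E. grid_adj p q) \<and> sym E"

definition hedges :: "(pixel \<times> pixel) set \<Rightarrow> (pixel \<times> pixel) set" where
  "hedges E = {(p,q). (p,q) \<in> E \<and> snd p = snd q}"

definition vedges :: "(pixel \<times> pixel) set \<Rightarrow> (pixel \<times> pixel) set" where
  "vedges E = {(p,q). (p,q) \<in> E \<and> fst p = fst q}"

definition rowseg :: "(pixel \<times> pixel) set \<Rightarrow> pixel \<Rightarrow> pixel set" where
  "rowseg E p = (hedges E)\<^sup>* `` {p}"

definition colseg :: "(pixel \<times> pixel) set \<Rightarrow> pixel \<Rightarrow> pixel set" where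
  "colseg E p = (vedges E)\<^sup>* `` {p}"

datatype dir = Left | Right | Up | Down

fun tilt :: "(pixel \<times> pixel) set \<Rightarrow> dir \<Rightarrow> pixel \<Rightarrow> pixel" where
  "tilt E Left p = (Min (fst ` rowseg E p), snd p)"
| "tilt E Right p = (Max (fst ` rowseg E p), snd p)"
| "tilt E Up p = (fst p, Min (snd ` colseg E p))"
| "tilt E Down p = (fst p, Max (snd ` colseg E p))"

definition full_tilt_edges :: "pixel set \<Rightarrow> (pixel \<times> pixel) set \<Rightarrow> (pixel \<times> pixel) set" where
  "full_tilt_edges V E = {(p, tilt E x p) | p x. p \<in> V \<and> tilt E x p \<noteq> p}"

definition corner_pixel :: "pixel set \<Rightarrow> (pixel \<times> pixel) set \<Rightarrow> pixel \<Rightarrow> bool" where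
  "corner_pixel V E p \<longleftrightarrow> p \<in> V \<and>
     (\<exists>x\<in>{Left, Right}. \<exists>y\<in>{Up, Down}. p = tilt E x p \<and> p = tilt E y p)"

(* The four pixels around the grid point v = (i,j), in cyclic order. *)
definition quad :: "int \<times> int \<Rightarrow> nat \<Rightarrow> pixel" where
  "quad v k = (let i = fst v; j = snd v; m = k mod 4 in
     if m = 0 then (i - 1, j - 1) else if m = 1 then (i, j - 1)
     else if m = 2 then (i, j) else (i - 1, j))"

(* A grid point v is a reflex corner of the boundary if, at v, some region
   occupies an angle > 180 degrees bounded by boundary sides: there are
   cyclically consecutive pixels a,b,c,d around v with a,b,c board pixels,
   a-b and b-c joined by edges, and the side between d and a a boundary side. *)
definition reflex_corner :: "pixel set \<Rightarrow> (pixel \<times> pixel) set \<Rightarrow> int \<times> int \<Rightarrow> bool" where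
  "reflex_corner V E v \<longleftrightarrow> (\<exists>k<4.
     quad v k \<in> V \<and> quad v (k+1) \<in> V \<and> quad v (k+2) \<in> V \<and>
     (quad v k, quad v (k+1)) \<in> E \<and> (quad v (k+1), quad v (k+2)) \<in> E \<and>
     (quad v (k+3), quad v k) \<notin> E)"

definition incident_pixels :: "pixel set \<Rightarrow> int \<times> int \<Rightarrow> pixel set" where
  "incident_pixels V v = {quad v k | k. k < 4} \<inter> V"

definition large_base :: "pixel set \<Rightarrow> (pixel \<times> pixel) set \<Rightarrow> pixel set \<Rightarrow> pixel set" where
  "large_base V E S =
     {q. \<exists>c. corner_pixel V E c \<and> (c, q) \<in> (full_tilt_edges V E)\<^sup>*}
   \<union> S \<union> {tilt E x s | s x. s \<in> S}
   \<union> {tilt E x p | p x v. reflex_corner V E v \<and> p \<in> incident_pixels V v}"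

definition large_vertices :: "pixel set \<Rightarrow> (pixel \<times> pixel) set \<Rightarrow> pixel set \<Rightarrow> pixel set" where
  "large_vertices V E S = large_base V E S \<union>
     {q. \<exists>a\<in>large_base V E S. \<exists>b\<in>large_base V E S. q \<in> rowseg E a \<and> q \<in> colseg E b}"

definition large_edges :: "pixel set \<Rightarrow> (pixel \<times> pixel) set \<Rightarrow> pixel set \<Rightarrow> (pixel \<times> pixel) set" where
  "large_edges V E S = full_tilt_edges V E \<inter> (large_vertices V E S \<times> large_vertices V E S)"

(* Extended graph: pixels are Some p, the new root r is None. *)
definition ext_vertices :: "'a set \<Rightarrow> 'a option set" where
  "ext_vertices VG = Some ` VG \<union> {None}"

definition inv_edges :: "('a \<times> 'a) set \<Rightarrow> ('a option \<times> 'a option) set" where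
  "inv_edges EG = {(Some q, Some p) | p q. (p, q) \<in> EG \<and> (q, p) \<notin> EG}"

definition ext_edges :: "('a \<times> 'a) set \<Rightarrow> 'a set \<Rightarrow> ('a option \<times> 'a option) set" where
  "ext_edges EG S = {(Some p, Some q) | p q. (p, q) \<in> EG} \<union> inv_edges EG
                    \<union> {(Some s, None) | s. s \<in> S}"

definition ext_weight :: "('a \<times> 'a) set \<Rightarrow> 'a option \<times> 'a option \<Rightarrow> nat" where
  "ext_weight EG e = (if e \<in> inv_edges EG then 1 else 0)"

definition arborescence :: "'v set \<Rightarrow> ('v \<times> 'v) set \<Rightarrow> 'v \<Rightarrow> ('v \<times> 'v) set \<Rightarrow> bool" where
  "arborescence Vs Es r T \<longleftrightarrow> T \<subseteq> Es \<and>
     (\<forall>v\<in>Vs - {r}. \<exists>!u. (v, u) \<in> T) \<and>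
     (\<forall>v\<in>Vs - {r}. (v, r) \<in> T\<^sup>+)"

definition arb_weight :: "('a \<times> 'a) set \<Rightarrow> ('a option \<times> 'a option) set \<Rightarrow> nat" where
  "arb_weight EG T = (\<Sum>e\<in>T. ext_weight EG e)"

definition min_arborescence :: "'a set \<Rightarrow> ('a \<times> 'a) set \<Rightarrow> 'a set \<Rightarrow> ('a option \<times> 'a option) set \<Rightarrow> bool" where
  "min_arborescence VG EG S T \<longleftrightarrow>
     arborescence (ext_vertices VG) (ext_edges EG S) None T \<and>
     (\<forall>T'. arborescence (ext_vertices VG) (ext_edges EG S) None T' \<longrightarrow>
            arb_weight EG T \<le> arb_weight EG T')"

end

theory Submission
  imports Defs
begin

lemma hsnd: "(p,q) \<in> (hedges E)\<^sup>* \<Longrightarrow> snd q = snd p"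
  by (induction rule: rtrancl_induct) (auto simp: hedges_def)

lemma vfst: "(p,q) \<in> (vedges E)\<^sup>* \<Longrightarrow> fst q = fst p"
  by (induction rule: rtrancl_induct) (auto simp: vedges_def)

lemma hV: "board V E \<Longrightarrow> p \<in> V \<Longrightarrow> (p,q) \<in> (hedges E)\<^sup>* \<Longrightarrow> q \<in> V"
  by (rotate_tac 2, induction rule: rtrancl_induct) (auto simp: hedges_def board_def)

lemma vV: "board V E \<Longrightarrow> p \<in> V \<Longrightarrow> (p,q) \<in> (vedges E)\<^sup>* \<Longrightarrow> q \<in> V"
  by (rotate_tac 2, induction rule: rtrancl_induct) (auto simp: vedges_def board_def)

lemma rowseg_sub: "board V E \<Longrightarrow> p \<in> V \<Longrightarrow> rowseg E p \<subseteq> V"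
  unfolding rowseg_def using hV by blast

lemma colseg_sub: "board V E \<Longrightarrow> p \<in> V \<Longrightarrow> colseg E p \<subseteq> V"
  unfolding colseg_def using vV by blast

lemma tilt_V:
  assumes B: "board V E" and p: "p \<in> V"
  shows "tilt E x p \<in> V"
proof -
  have fV: "finite V" using B by (simp add: board_def)
  have Rf: "finite (rowseg E p)" "rowseg E p \<noteq> {}" "rowseg E p \<subseteq> V"
    using rowseg_sub[OF B p] fV finite_subset by (auto simp: rowseg_def)
  have Cf: "finite (colseg E p)" "colseg E p \<noteq> {}" "colseg E p \<subseteq> V"
    using colseg_sub[OF B p] fV finite_subset by (auto simp: colseg_def)
  show ?thesis
  proof (cases x)
    case Left
    have "Min (fst ` rowseg E p) \<in> fst ` rowseg E p" using Rf by (intro Min_in) auto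
    then obtain q where q: "q \<in> rowseg E p" "fst q = Min (fst ` rowseg E p)" by auto
    have "snd q = snd p" using q(1) hsnd by (auto simp: rowseg_def)
    then have "tilt E x p = q" using Left q by (cases q) auto
    then show ?thesis using q Rf by auto
  next
    case Right
    have "Max (fst ` rowseg E p) \<in> fst ` rowseg E p" using Rf by (intro Max_in) auto
    then obtain q where q: "q \<in> rowseg E p" "fst q = Max (fst ` rowseg E p)" by auto
    have "snd q = snd p" using q(1) hsnd by (auto simp: rowseg_def)
    then have "tilt E x p = q" using Right q by (cases q) auto
    then show ?thesis using q Rf by auto
  next
    case Up
    have "Min (snd ` colseg E p) \<in> snd ` colseg E p" using Cf by (intro Min_in) auto
    then obtain q where q: "q \<in> colseg E p" "snd q = Min (snd ` colseg E p)" by auto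
    have "fst q = fst p" using q(1) vfst by (auto simp: colseg_def)
    then have "tilt E x p = q" using Up q by (cases q) auto
    then show ?thesis using q Cf by auto
  next
    case Down
    have "Max (snd ` colseg E p) \<in> snd ` colseg E p" using Cf by (intro Max_in) auto
    then obtain q where q: "q \<in> colseg E p" "snd q = Max (snd ` colseg E p)" by auto
    have "fst q = fst p" using q(1) vfst by (auto simp: colseg_def)
    then have "tilt E x p = q" using Down q by (cases q) auto
    then show ?thesis using q Cf by auto
  qed
qed

lemma ft_dest: "(p,q) \<in> full_tilt_edges V E \<Longrightarrow> \<exists>x. q = tilt E x p \<and> p \<in> V \<and> q \<noteq> p"
  unfolding full_tilt_edges_def by auto

lemma ft_intro: "p \<in> V \<Longrightarrow> tilt E x p \<noteq> p \<Longrightarrow> (p, tilt E x p) \<in> full_tilt_edges V E"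
  unfolding full_tilt_edges_def by blast

lemma ext_ok: "EG \<subseteq> LV \<times> LV \<Longrightarrow> S \<subseteq> LV \<Longrightarrow> (u,v) \<in> ext_edges EG S \<Longrightarrow>
   u \<in> ext_vertices LV \<and> u \<noteq> None \<and> v \<in> ext_vertices LV"
  unfolding ext_edges_def inv_edges_def ext_vertices_def by auto

lemma ext_in: "(p,q) \<in> EG \<Longrightarrow> (Some p, Some q) \<in> ext_edges EG S"
  unfolding ext_edges_def by blast

lemma ftV: "board V E \<Longrightarrow> (p,q) \<in> full_tilt_edges V E \<Longrightarrow> p \<in> V \<and> q \<in> V"
  unfolding full_tilt_edges_def using tilt_V by blast

lemma ftrV: "board V E \<Longrightarrow> (p,q) \<in> (full_tilt_edges V E)\<^sup>* \<Longrightarrow> p \<in> V \<Longrightarrow> q \<in> V"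
  by (rotate_tac 1, induction rule: rtrancl_induct) (use ftV in blast)+

lemma base_V:
  assumes B: "board V E" and S: "S \<subseteq> V"
  shows "large_base V E S \<subseteq> V"
proof
  fix q assume "q \<in> large_base V E S"
  then consider (a) c where "corner_pixel V E c" "(c, q) \<in> (full_tilt_edges V E)\<^sup>*"
    | (b) "q \<in> S" | (c) s x where "q = tilt E x s" "s \<in> S"
    | (d) p x v where "q = tilt E x p" "p \<in> incident_pixels V v"
    unfolding large_base_def by blast
  then show "q \<in> V"
  proof cases
    case a then show ?thesis using ftrV[OF B] by (auto simp: corner_pixel_def)
  next
    case b then show ?thesis using S by auto
  next
    case c then show ?thesis using S tilt_V[OF B, of s x] by auto
  next
    case d then show ?thesis using tilt_V[OF B] by (auto simp: incident_pixels_def)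
  qed
qed

lemma LV_V:
  assumes B: "board V E" and S: "S \<subseteq> V"
  shows "large_vertices V E S \<subseteq> V"
  using base_V[OF B S] rowseg_sub[OF B] unfolding large_vertices_def by blast

lemma rowseg_eq:
  assumes B: "board V E" and q: "q \<in> rowseg E p"
  shows "rowseg E q = rowseg E p"
proof -
  have "sym E" using B by (simp add: board_def)
  hence sH: "sym (hedges E)" unfolding sym_def hedges_def by auto
  hence "sym ((hedges E)\<^sup>*)" by (rule sym_rtrancl)
  have pq: "(p,q) \<in> (hedges E)\<^sup>*" using q by (simp add: rowseg_def)
  hence qp: "(q,p) \<in> (hedges E)\<^sup>*" using \<open>sym ((hedges E)\<^sup>*)\<close> by (meson symD)
  show ?thesis unfolding rowseg_def using pq qp by (meson rtrancl_trans Image_singleton_iff subsetI subset_antisym)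
qed

lemma arb_func:
  assumes "arborescence Vs Es r T" "\<forall>(u,v)\<in>Es. u \<in> Vs \<and> u \<noteq> r"
    "(u,v) \<in> T" "(u,w) \<in> T"
  shows "v = w"
proof -
  have "u \<in> Vs - {r}" using assms unfolding arborescence_def by blast
  then show ?thesis using assms unfolding arborescence_def by blast
qed

lemma arb_nocycle:
  assumes A: "arborescence Vs Es r T" and B: "\<forall>(u,v)\<in>Es. u \<in> Vs \<and> u \<noteq> r"
    and C: "(a,a) \<in> T\<^sup>+"
  shows False
proof -
  obtain a' where "(a,a') \<in> T" using C by (meson tranclD)
  hence av: "a \<in> Vs - {r}" using A B unfolding arborescence_def by blast
  hence ar: "(a,r) \<in> T\<^sup>+" using A unfolding arborescence_def by blast
  have claim: "(v,a) \<in> T\<^sup>*" if "(a,v) \<in> T\<^sup>*" for v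
    using that
  proof (induction rule: rtrancl_induct)
    case base then show ?case by simp
  next
    case (step v w)
    have "(v,a) \<in> T\<^sup>+"
      using step C by (metis rtrancl_eq_or_trancl)
    then obtain v' where "(v,v') \<in> T" "(v',a) \<in> T\<^sup>*" by (meson tranclD)
    with arb_func[OF A B this(1) step(2)] show ?case by simp
  qed
  have "(r,a) \<in> T\<^sup>*" using claim ar by (meson trancl_into_rtrancl)
  moreover have "r \<noteq> a" using av by auto
  ultimately have "(r,a) \<in> T\<^sup>+" by (meson rtranclD)
  then obtain r' where "(r,r') \<in> T" by (meson tranclD)
  then show False using A B unfolding arborescence_def by blast
qed

lemma arb_swap:
  assumes A: "arborescence Vs Es r T" and B: "\<forall>(u,v)\<in>Es. u \<in> Vs \<and> u \<noteq> r"
    and EV: "Es \<subseteq> Vs \<times> Vs" and xz: "(x,z) \<in> T" and xy: "(x,y) \<in> Es" and yx: "(y,x) \<notin> T\<^sup>*"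
  shows "arborescence Vs Es r (T - {(x,z)} \<union> {(x,y)})"
proof -
  define T' where "T' = T - {(x,z)} \<union> {(x,y)}"
  have func: "\<And>u v w. (u,v) \<in> T \<Longrightarrow> (u,w) \<in> T \<Longrightarrow> v = w"
    using arb_func[OF A B] by blast
  have sub: "T' \<subseteq> Es" using A xy unfolding T'_def arborescence_def by blast
  have uniq: "\<forall>v\<in>Vs - {r}. \<exists>!u. (v, u) \<in> T'"
  proof
    fix v assume v: "v \<in> Vs - {r}"
    show "\<exists>!u. (v, u) \<in> T'"
    proof (cases "v = x")
      case True
      then show ?thesis unfolding T'_def using func xz by auto
    next
      case False
      then show ?thesis using v A unfolding T'_def arborescence_def by auto
    qed
  qed
  have p1: "(v,r) \<in> T'\<^sup>*" if "(v,r) \<in> T\<^sup>*" "(v,x) \<notin> T\<^sup>*" for v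
    using that
  proof (induction rule: converse_rtrancl_induct)
    case base then show ?case by simp
  next
    case (step v u)
    have "(u,x) \<notin> T\<^sup>*" using step by (meson converse_rtrancl_into_rtrancl)
    hence "(u,r) \<in> T'\<^sup>*" using step by blast
    moreover have "(v,u) \<in> T'" using step unfolding T'_def by auto
    ultimately show ?case by (meson converse_rtrancl_into_rtrancl)
  qed
  have p2: "(v,x) \<in> T'\<^sup>*" if "(v,x) \<in> T\<^sup>*" for v
    using that
  proof (induction rule: converse_rtrancl_induct)
    case base then show ?case by simp
  next
    case (step v u)
    show ?case
    proof (cases "v = x")
      case True then show ?thesis by simp
    next
      case False
      hence "(v,u) \<in> T'" using step unfolding T'_def by auto
      then show ?thesis using step by (meson converse_rtrancl_into_rtrancl)
    qed
  qed
  have yV: "y \<in> Vs - {r} \<or> y = r"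
    using EV xy by blast
  have yr: "(y,r) \<in> T'\<^sup>*"
  proof (cases "y = r")
    case True then show ?thesis by simp
  next
    case False
    hence "y \<in> Vs - {r}" using yV by blast
    hence "(y,r) \<in> T\<^sup>+" using A unfolding arborescence_def by blast
    then show ?thesis using p1 yx by (meson trancl_into_rtrancl)
  qed
  have xr: "(x,r) \<in> T'\<^sup>+"
  proof -
    have "(x,y) \<in> T'" unfolding T'_def by simp
    then show ?thesis using yr by auto
  qed
  have reach: "\<forall>v\<in>Vs - {r}. (v, r) \<in> T'\<^sup>+"
  proof
    fix v assume v: "v \<in> Vs - {r}"
    hence vr: "(v,r) \<in> T\<^sup>+" using A unfolding arborescence_def by blast
    show "(v, r) \<in> T'\<^sup>+"
    proof (cases "(v,x) \<in> T\<^sup>*")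
      case True
      then show ?thesis using p2 xr by (meson rtrancl_trancl_trancl)
    next
      case False
      hence "(v,r) \<in> T'\<^sup>*" using p1 vr by (meson trancl_into_rtrancl)
      moreover have "v \<noteq> r" using v by blast
      ultimately show ?thesis by (metis rtranclD)
    qed
  qed
  show ?thesis unfolding arborescence_def T'_def[symmetric] using sub uniq reach by blast
qed

lemma arb_improve:
  fixes w :: "'v \<times> 'v \<Rightarrow> nat"
  assumes A: "arborescence Vs Es r T" and B: "\<forall>(u,v)\<in>Es. u \<in> Vs \<and> u \<noteq> r"
    and EV: "Es \<subseteq> Vs \<times> Vs" and fin: "finite T" and anb: "a \<noteq> b"
    and ac: "(a,c) \<in> T" and bd: "(b,d) \<in> T" and ab: "(a,b) \<in> Es" and ba: "(b,a) \<in> Es"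
    and w1: "w (a,b) < w (a,c)" and w2: "w (b,a) < w (b,d)"
  shows "\<exists>T'. arborescence Vs Es r T' \<and> sum w T' < sum w T"
proof -
  have func: "\<And>u v w. (u,v) \<in> T \<Longrightarrow> (u,w) \<in> T \<Longrightarrow> v = w"
    using arb_func[OF A B] by blast
  have gen: "\<exists>T'. arborescence Vs Es r T' \<and> sum w T' < sum w T"
    if xz: "(x,z) \<in> T" and xy: "(x,y) \<in> Es" and yx: "(y,x) \<notin> T\<^sup>*"
      and wl: "w (x,y) < w (x,z)" for x y z
  proof -
    let ?T' = "T - {(x,z)} \<union> {(x,y)}"
    have arb: "arborescence Vs Es r ?T'" using arb_swap[OF A B EV xz xy yx] .
    have ne: "y \<noteq> z" using wl by auto
    have nin: "(x,y) \<notin> T - {(x,z)}" using func[OF xz] ne by blast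
    have "sum w ?T' = sum w (T - {(x,z)}) + w (x,y)"
      using fin nin by (simp add: sum.insert_if)
    moreover have "sum w T = sum w (T - {(x,z)}) + w (x,z)"
      using fin xz by (metis add.commute sum.remove)
    ultimately show ?thesis using arb wl by auto
  qed
  show ?thesis
  proof (cases "(b,a) \<in> T\<^sup>*")
    case False
    then show ?thesis using gen[OF ac ab _ w1] by blast
  next
    case True
    have "a \<noteq> b" using anb .
    hence "(b,a) \<in> T\<^sup>+" using True by (metis rtranclD)
    hence "(a,b) \<notin> T\<^sup>*"
      using arb_nocycle[OF A B] by (meson rtrancl_trancl_trancl)
    then show ?thesis using gen[OF bd ba _ w2] by blast
  qed
qed

theorem mainTheorem6:
  fixes V :: "pixel set" and E :: "(pixel \<times> pixel) set" and S :: "pixel set"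
    and T :: "(pixel option \<times> pixel option) set"
    and p1 q1 p2 q2 :: pixel
  assumes "board V E"
    and "S \<subseteq> V"
    and "\<forall>v\<in>V. \<exists>s\<in>S. (v, s) \<in> E\<^sup>*"
    and "min_arborescence (large_vertices V E S) (large_edges V E S) S T"
    and "(Some p1, Some q1) \<in> T \<inter> inv_edges (large_edges V E S)"
    and "(Some p2, Some q2) \<in> T \<inter> inv_edges (large_edges V E S)"
    and "(p1, q1) \<noteq> (p2, q2)"
    and "q2 \<in> rowseg E q1"
  shows "\<not> (p1 \<in> rowseg E q1 \<and> p2 \<in> rowseg E q1)"
proof
  assume both: "p1 \<in> rowseg E q1 \<and> p2 \<in> rowseg E q1"
  note B = assms(1)
  define LV where "LV = large_vertices V E S"
  define EG where "EG = large_edges V E S"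
  define R where "R = rowseg E q1"
  have p1R: "p1 \<in> R" and p2R: "p2 \<in> R" and q2R: "q2 \<in> R" using both assms(8) by (auto simp: R_def)
  have A: "arborescence (ext_vertices LV) (ext_edges EG S) None T"
   and minT: "\<And>T'. arborescence (ext_vertices LV) (ext_edges EG S) None T' \<Longrightarrow> arb_weight EG T \<le> arb_weight EG T'"
    using assms(4) unfolding min_arborescence_def LV_def EG_def by auto
  have T1: "(Some p1, Some q1) \<in> T" and T2: "(Some p2, Some q2) \<in> T" using assms(5,6) by auto
  have i1: "(q1,p1) \<in> EG" "(p1,q1) \<notin> EG" using assms(5) unfolding inv_edges_def EG_def by auto
  have i2: "(q2,p2) \<in> EG" "(p2,q2) \<notin> EG" using assms(6) unfolding inv_edges_def EG_def by auto
  have EGsub: "EG \<subseteq> LV \<times> LV" unfolding EG_def LV_def large_edges_def by auto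
  have EGft: "EG \<subseteq> full_tilt_edges V E" unfolding EG_def large_edges_def by auto
  have LVV: "LV \<subseteq> V" unfolding LV_def using LV_V[OF B assms(2)] .
  have SLV: "S \<subseteq> LV" unfolding LV_def large_vertices_def large_base_def by auto
  obtain x1 where x1: "p1 = tilt E x1 q1" "q1 \<in> V" "p1 \<noteq> q1"
    using ft_dest[of q1 p1 V E] i1(1) EGft by blast
  obtain x2 where x2: "p2 = tilt E x2 q2" "q2 \<in> V" "p2 \<noteq> q2"
    using ft_dest[of q2 p2 V E] i2(1) EGft by blast
  have sndR: "\<And>u. u \<in> R \<Longrightarrow> snd u = snd q1" using hsnd unfolding R_def rowseg_def by auto
  have rowR: "\<And>u. u \<in> R \<Longrightarrow> rowseg E u = R" using rowseg_eq[OF B] unfolding R_def by auto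
  have tiltR: "\<And>u x. u \<in> R \<Longrightarrow> x = Left \<or> x = Right \<Longrightarrow> tilt E x u = tilt E x q1"
  proof -
    fix u x assume u: "u \<in> R" and x: "x = Left \<or> x = Right"
    have "rowseg E q1 = R" by (simp add: R_def)
    then show "tilt E x u = tilt E x q1" using x rowR[OF u] sndR[OF u] by auto
  qed
  have hx1: "x1 = Left \<or> x1 = Right"
  proof (cases x1)
    case Up
    hence "fst p1 = fst q1" using x1 by simp
    moreover have "snd p1 = snd q1" using sndR[OF p1R] .
    ultimately show ?thesis using x1(3) by (simp add: prod_eq_iff)
  next
    case Down
    hence "fst p1 = fst q1" using x1 by simp
    moreover have "snd p1 = snd q1" using sndR[OF p1R] .
    ultimately show ?thesis using x1(3) by (simp add: prod_eq_iff)
  qed auto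
  have hx2: "x2 = Left \<or> x2 = Right"
  proof (cases x2)
    case Up
    hence "fst p2 = fst q2" using x2 by simp
    moreover have "snd p2 = snd q2" using sndR[OF p2R] sndR[OF q2R] by simp
    ultimately show ?thesis using x2(3) by (simp add: prod_eq_iff)
  next
    case Down
    hence "fst p2 = fst q2" using x2 by simp
    moreover have "snd p2 = snd q2" using sndR[OF p2R] sndR[OF q2R] by simp
    ultimately show ?thesis using x2(3) by (simp add: prod_eq_iff)
  qed auto
  have p2': "p2 = tilt E x2 q1" using x2(1) tiltR[OF q2R hx2] by simp
  have Vs_ok: "\<forall>(u,v)\<in>ext_edges EG S. u \<in> ext_vertices LV \<and> u \<noteq> None"
    using ext_ok[OF EGsub SLV] by blast
  have EV: "ext_edges EG S \<subseteq> ext_vertices LV \<times> ext_vertices LV"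
    using ext_ok[OF EGsub SLV] by (auto simp del: ext_vertices_def)
  show False
  proof (cases "p1 = p2")
    case True
    have "Some q1 = Some q2" using arb_func[OF A Vs_ok T1] T2 True by simp
    then show False using True assms(7) by simp
  next
    case False
    have ne: "x1 \<noteq> x2" using False x1(1) p2' by auto
    have e12: "p2 = tilt E x2 p1" using tiltR[OF p1R hx2] p2' by simp
    have e21: "p1 = tilt E x1 p2" using tiltR[OF p2R hx1] x1(1) by simp
    have p1V: "p1 \<in> V" and p2V: "p2 \<in> V" using i1(1) i2(1) EGsub LVV by auto
    have p1L: "p1 \<in> LV" and p2L: "p2 \<in> LV" using i1(1) i2(1) EGsub by auto
    have "(p1,p2) \<in> full_tilt_edges V E" using ft_intro[OF p1V, of E x2] e12 False by simp
    moreover have "(p2,p1) \<in> full_tilt_edges V E" using ft_intro[OF p2V, of E x1] e21 False by simp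
    ultimately have f12: "(p1,p2) \<in> EG" "(p2,p1) \<in> EG"
      using p1L p2L unfolding EG_def large_edges_def LV_def by auto
    have E12: "(Some p1, Some p2) \<in> ext_edges EG S" "(Some p2, Some p1) \<in> ext_edges EG S"
      by (rule ext_in[OF f12(1)], rule ext_in[OF f12(2)])
    have "(Some p1, Some p2) \<notin> inv_edges EG" "(Some p2, Some p1) \<notin> inv_edges EG"
      using f12 unfolding inv_edges_def by auto
    hence w0: "ext_weight EG (Some p1, Some p2) = 0" "ext_weight EG (Some p2, Some p1) = 0"
      unfolding ext_weight_def by auto
    have w1: "ext_weight EG (Some p1, Some q1) = 1" "ext_weight EG (Some p2, Some q2) = 1"
      using assms(5,6) unfolding ext_weight_def EG_def by auto
    have finLV: "finite LV" using LVV B finite_subset unfolding board_def by blast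
    have "finite (ext_vertices LV)" using finLV unfolding ext_vertices_def by simp
    hence "finite (ext_edges EG S)" using EV finite_subset by blast
    hence finT: "finite T" using A finite_subset unfolding arborescence_def by blast
    obtain T' where "arborescence (ext_vertices LV) (ext_edges EG S) None T'"
        "sum (ext_weight EG) T' < sum (ext_weight EG) T"
      using arb_improve[OF A Vs_ok EV finT _ T1 T2 E12, of "ext_weight EG"] False w0 w1 by auto
    then show False using minT unfolding arb_weight_def by fastforce
  qed
qed

end
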